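(* Let $K$ be a field with $\operatorname{char}(K)=0$ and $a\in K$, $a\neq 0$. If $n\geq 4$, there exist two distinct critical points of $D_n(x,a)$ with equal critical values. If $n\geq 6$, there exist three distinct critical points of $D_n(x,a)$ with equal critical values.
   Context: The $n$-th Dickson polynomial with parameter $a$ is $D_n(x,a)=\sum_{j=0}^{\lfloor n/2\rfloor}\frac{n}{n-j}\binom{n-j}{j}(-a)^jx^{n-2j}$. Critical points are the roots of the derivative (in $\overline{K}$), critical values are the values of the polynomial at them. *)

theory Defs
  imports "HOL-Algebra.Algebraic_Closure_Type" "HOL-Computational_Algebra.Polynomial"
begin

definition dickson :: "nat \<Rightarrow> 'a::field \<Rightarrow> 'a poly" where
  "dickson n a = (\<Sum>j\<le>n div 2.
      monom (of_nat n / of_nat (n - j) * of_nat ((n - j) choose j) * (-a) ^ j) (n - 2 * j))"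

definition critical_point :: "'a::field poly \<Rightarrow> 'a alg_closure \<Rightarrow> bool" where
  "critical_point p z \<longleftrightarrow> poly (pderiv (map_poly to_ac p)) z = 0"

definition critical_value :: "'a::field poly \<Rightarrow> 'a alg_closure \<Rightarrow> 'a alg_closure" where
  "critical_value p z = poly (map_poly to_ac p) z"

end

theory Submission
  imports Defs
begin

definition dc :: "nat \<Rightarrow> 'a::field \<Rightarrow> nat \<Rightarrow> 'a" where
  "dc n a j = of_nat n / of_nat (n - j) * of_nat ((n - j) choose j) * (-a) ^ j"

lemma coeff_dickson:
  "coeff (dickson n a) k = (if k \<le> n \<and> even (n - k) then dc n a ((n - k) div 2) else 0)"
proof -
  have "coeff (dickson n a) k = (\<Sum>j\<le>n div 2. if n - 2 * j = k then dc n a j else 0)"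
    unfolding dickson_def coeff_sum coeff_monom dc_def by (rule refl)
  also have "\<dots> = (\<Sum>j\<le>n div 2. if j = (n - k) div 2 \<and> k \<le> n \<and> even (n - k) then dc n a j else 0)"
    proof (rule sum.cong[OF refl])
    fix j assume "j \<in> {..n div 2}"
    hence "n - 2 * j = k \<longleftrightarrow> (j = (n - k) div 2 \<and> k \<le> n \<and> even (n - k))" by auto
    thus "(if n - 2 * j = k then dc n a j else 0) = (if j = (n - k) div 2 \<and> k \<le> n \<and> even (n - k) then dc n a j else 0)" by simp
  qed
  also have "\<dots> = (if k \<le> n \<and> even (n - k) then dc n a ((n - k) div 2) else 0)"
  proof (cases "k \<le> n \<and> even (n - k)")
    case True
    hence "(n - k) div 2 \<in> {..n div 2}" by auto
    with True show ?thesis by (simp add: sum.delta)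
  next
    case False
    thus ?thesis by (simp only: simp_thms if_False sum.neutral_const)
  qed
  finally show ?thesis .
qed

lemma b1: "(k + 1) * (m choose (k+1)) = (m - k) * (m choose k)"
  using binomial_absorb_comp times_binomial_minus1_eq by fastforce
lemma b2: "m * ((m - 1) choose (i+1)) = (i+2) * (m choose (i+2))" if "m \<ge> 1"
  using Suc_eq_plus1 add_2_eq_Suc' binomial_absorption by presburger

lemma b3: "(i+1) * ((m-1) choose (i+1)) * m = (m-i-1)*(m-i)*(m choose i)" if "m \<ge> i + 2"
proof -
  have "(i+1) * ((m-1) choose (i+1)) * m = (i+1) * (m * ((m-1) choose (i+1)))"
    by (simp only: ac_simps)
  also have "\<dots> = (i+1) * ((i+2) * (m choose (i+2)))"
    using b2[of m i] that by simp
  also have "(i+2) * (m choose (i+2)) = (m - (i+1)) * (m choose (i+1))"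
    using b1[of "i+1" m] by simp
  also have "(i+1) * ((m - (i+1)) * (m choose (i+1))) = (m - (i+1)) * ((i+1) * (m choose (i+1)))"
    by (rule mult.left_commute)
  also have "(i+1) * (m choose (i+1)) = (m-i) * (m choose i)" using b1[of i m] by simp
  finally show ?thesis by (simp add: mult.assoc)
qed

lemma aux_sub: "(x::'a::ab_group_add) + y = z \<Longrightarrow> x - z = -y"
  by (auto simp: algebra_simps)

lemma aux_f1: "(M1::'a::field) \<noteq> 0 \<Longrightarrow> M \<noteq> 0 \<Longrightarrow>
   - (4 * I * M1) * (N / M1 * C1 * (-a)^(Suc i)) = 4 * a * (I * C1 * M) * (N / M * (-a)^i)"
  by (simp add: field_simps)

lemma aux_f2: "(M::'a::field) \<noteq> 0 \<Longrightarrow>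
   4 * a * P * (N / M * (-a)^i) = 4 * a * P' * (N / M * C * (-a)^i) \<longleftrightarrow> 4 * a * P * (N / M * (-a)^i) = 4 * a * (P' * C) * (N / M * (-a)^i)"
  by (simp add: field_simps)

lemma dc_step:
  fixes a :: "'a::field_char_0"
  assumes "n \<ge> 2*i+2"
  shows "of_nat ((n-2*i-2)*(n-2*i-2)) * dc n a (i+1) - of_nat (n*n) * dc n a (i+1)
       = 4 * a * of_nat ((n-2*i-1)*(n-2*i)) * dc n a i"
proof -
  define m where "m = n - i"
  have m: "m \<ge> i+2" "n - (i+1) = m - 1" "n - i = m" "n - Suc i = m - 1" using assms by (auto simp: m_def)
  have nat1: "(n-2*i-2)*(n-2*i-2) + 4*(i+1)*(m-1) = n*n"
  proof -
    define k where "k = n - 2*i - 2"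
    have e1: "n-2*i-2 = k" "m - 1 = k+i+1" "n = k+2*i+2" using assms unfolding k_def m_def by linarith+
    show ?thesis unfolding e1 by (simp add: algebra_simps)
  qed
  hence "(of_nat ((n-2*i-2)*(n-2*i-2) + 4*(i+1)*(m-1)) :: 'a) = of_nat (n*n)"
    by (rule arg_cong)
  hence "(of_nat ((n-2*i-2)*(n-2*i-2)) :: 'a) + 4 * of_nat (i+1) * of_nat (m-1) = of_nat (n*n)"
    by (simp only: of_nat_add of_nat_mult of_nat_numeral)
  hence f1: "of_nat ((n-2*i-2)*(n-2*i-2)) - of_nat (n*n) = - (4 * of_nat (i+1) * of_nat (m-1) :: 'a)"
    by (rule aux_sub)
  have nat2: "(i+1) * ((m-1) choose (i+1)) * m = (n-2*i-1)*(n-2*i)*(m choose i)"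
    using b3[OF m(1)] unfolding m_def by (metis diff_diff_left mult_2 add.commute)
  hence f2: "of_nat (i+1) * of_nat ((m-1) choose (i+1)) * of_nat m = (of_nat ((n-2*i-1)*(n-2*i)) * of_nat (m choose i) :: 'a)"
    by (simp only: of_nat_mult[symmetric])
  have m0: "of_nat (m-1) \<noteq> (0::'a)" "of_nat m \<noteq> (0::'a)" using m by auto
  have "of_nat ((n-2*i-2)*(n-2*i-2)) * dc n a (i+1) - of_nat (n*n) * dc n a (i+1)
      = - (4 * of_nat (i+1) * of_nat (m-1)) * dc n a (i+1)"
    using f1 by (metis left_diff_distrib)
  also have "\<dots> = 4 * a * (of_nat (i+1) * of_nat ((m-1) choose (i+1)) * of_nat m) * (of_nat n / of_nat m * (-a)^i)"
    unfolding dc_def m Suc_eq_plus1[symmetric] using m0 by (rule aux_f1)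
  also have "\<dots> = 4 * a * of_nat ((n-2*i-1)*(n-2*i)) * dc n a i"
    unfolding f2 dc_def m by (simp only: ac_simps)
  finally show ?thesis .
qed

lemma coeff_key:
  fixes a :: "'a::field_char_0"
  shows "of_nat (k*k) * coeff (dickson n a) k - of_nat (n*n) * coeff (dickson n a) k
       = 4 * a * of_nat ((k+1)*(k+2)) * coeff (dickson n a) (k+2)"
proof (cases "k < n \<and> even (n - k)")
  case True
  from True have "even (n - k)" by (rule conjunct2)
  then obtain b where b: "n - k = 2 * b" by (rule evenE)
  define i where "i = b - 1"
  have nki: "n - k = 2*i + 2" using b True unfolding i_def by linarith
  have i: "n \<ge> 2*i+2" "k = n-2*i-2" "k+1 = n-2*i-1" "k+2 = n-2*i" using nki True by linarith+
  have e1: "(n - k) div 2 = i+1" "n - (k+2) = 2*i" "k + 2 \<le> n" using nki by linarith+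
  have cond: "(k \<le> n \<and> even (n - k)) = True" using True by auto
  have cond2: "(k + 2 \<le> n \<and> even (n - (k + 2))) = True" using e1 by auto
  have c1: "coeff (dickson n a) k = dc n a (i+1)"
    unfolding coeff_dickson cond if_True e1 by (rule refl)
  have c2: "coeff (dickson n a) (k+2) = dc n a i"
    using e1 unfolding coeff_dickson by simp
  show ?thesis unfolding c1 c2 using dc_step[OF i(1), of a] i by simp
next
  case False
  have c2: "coeff (dickson n a) (k+2) = 0"
    using False unfolding coeff_dickson by auto
  show ?thesis
  proof (cases "k = n")
    case True thus ?thesis using c2 by simp
  next
    case False
    hence "coeff (dickson n a) k = 0"
      using \<open>\<not> (k < n \<and> even (n - k))\<close> unfolding coeff_dickson by auto
    thus ?thesis using c2 by simp
  qed
qed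

lemma dickson_ode:
  fixes a :: "'a::field_char_0" and n :: nat
  defines "D \<equiv> dickson n a"
  shows "smult (-4*a) (pderiv (pderiv D)) + monom 1 2 * pderiv (pderiv D) + monom 1 1 * pderiv D
         = smult (of_nat (n*n)) D"
proof (rule poly_eqI)
  fix k
  have key: "of_nat (k*k) * coeff D k - of_nat (n*n) * coeff D k
       = 4 * a * of_nat ((k+1)*(k+2)) * coeff D (k+2)" unfolding D_def by (rule coeff_key)
  have "coeff (smult (-4*a) (pderiv (pderiv D)) + monom 1 2 * pderiv (pderiv D) + monom 1 1 * pderiv D) k
     = -4*a * (of_nat (Suc k) * (of_nat (Suc (Suc k)) * coeff D (Suc (Suc k))))
       + (if k < 2 then 0 else 1 * (of_nat (Suc (k-2)) * (of_nat (Suc (Suc (k-2))) * coeff D (Suc (Suc (k-2))))))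
       + (if k < 1 then 0 else 1 * (of_nat (Suc (k-1)) * coeff D (Suc (k-1))))"
    by (simp only: coeff_add coeff_smult coeff_monom_mult coeff_pderiv)
  also have "\<dots> = coeff (smult (of_nat (n*n)) D) k"
  proof (cases k)
    case 0 thus ?thesis using key by (simp add: algebra_simps) (metis minus_minus)
  next
    case (Suc j) thus ?thesis using key by (cases j) (simp_all add: algebra_simps)
  qed
  finally show "coeff (smult (-4*a) (pderiv (pderiv D)) + monom 1 2 * pderiv (pderiv D) + monom 1 1 * pderiv D) k
         = coeff (smult (of_nat (n*n)) D) k" .
qed

lemma dickson_c01:
  fixes a :: "'a::field_char_0"
  assumes "n \<ge> 1"
  shows "of_nat (n*n) * coeff (dickson n a) 0 ^ 2 + 4 * a * coeff (dickson n a) 1 ^ 2 = 4 * of_nat (n*n) * a ^ n"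
proof (cases "even n")
  case True
  then obtain j where j: "n = 2*j" by (rule evenE)
  have j1: "j \<ge> 1" using assms j by simp
  have c0: "coeff (dickson n a) 0 = 2 * (-a)^j"
    unfolding coeff_dickson dc_def using j j1 by simp
  have c1: "coeff (dickson n a) 1 = 0"
    unfolding coeff_dickson using j by auto
  show ?thesis unfolding c0 c1 by (simp add: j power_mult_distrib power_mult[symmetric] algebra_simps)
next
  case False
  then obtain j where j: "n = 2*j+1" using oddE by blast
  have c0: "coeff (dickson n a) 0 = 0"
    unfolding coeff_dickson using j by auto
  have e: "n - 1 = 2 * j" "n - j = j + 1" using j by auto
  have c1: "coeff (dickson n a) 1 = of_nat n * (-a)^j"
  proof -
    have nz: "(1 + of_nat j :: 'a) \<noteq> 0" using of_nat_neq_0[of j, where 'a='a] by simp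
    show ?thesis unfolding coeff_dickson dc_def using j nz by (simp add: e)
  qed
  have sq: "(- a) ^ j * (-a)^j = a^(2*j)"
  proof -
    have "(- a) ^ j * (-a)^j = ((-a)*(-a))^j" by (rule power_mult_distrib[symmetric])
    also have "\<dots> = (a*a)^j" by simp
    also have "\<dots> = a^j * a^j" by (rule power_mult_distrib)
    also have "\<dots> = a^(2*j)" by (simp add: power_add[symmetric] mult_2)
    finally show ?thesis .
  qed
  have "of_nat (n*n) * coeff (dickson n a) 0 ^ 2 + 4 * a * coeff (dickson n a) 1 ^ 2
     = 4 * of_nat (n*n) * (a * ((- a) ^ j * (-a)^j))"
    unfolding c0 c1 by (simp add: power2_eq_square algebra_simps)
  also have "\<dots> = 4 * of_nat (n*n) * a ^ n" unfolding sq j by simp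
  finally show ?thesis .
qed

lemma ode2:
  fixes a :: "'a::field_char_0"
  shows "[:-4*a,0,1:] * pderiv (pderiv (dickson n a)) + [:0,1:] * pderiv (dickson n a)
         = [:of_nat (n*n):] * dickson n a"
proof -
  have m2: "monom (1::'a) 2 = [:0,0,1:]" by (simp add: numeral_2_eq_2 monom_Suc monom_0)
  have m1: "monom (1::'a) 1 = [:0,1:]" by (simp add: monom_altdef)
  have e: "[:-4*a,0,1:] = [:-4*a:] + [:0,0,1:]" by simp
  show ?thesis using dickson_ode[where n=n and a=a] unfolding m1 m2 e
    by (simp add: algebra_simps)
qed

lemma dickson_id:
  fixes a :: "'a::field_char_0"
  assumes "n \<ge> 1"
  defines "D \<equiv> dickson n a"
  shows "[:of_nat (n*n):] * (D * D) - [:-4*a,0,1:] * (pderiv D * pderiv D) = [:4 * of_nat (n*n) * a^n:]"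
proof -
  define Q where "Q = [:of_nat (n*n):] * (D * D) - [:-4*a,0,1:] * (pderiv D * pderiv D)"
  have "pderiv Q = [:2:] * pderiv D * ([:of_nat (n*n):] * D - ([:-4*a,0,1:] * pderiv (pderiv D) + [:0,1:] * pderiv D))"
    unfolding Q_def by (simp add: pderiv_mult pderiv_diff pderiv_add pderiv_smult pderiv_pCons numeral_poly algebra_simps)
  also have "\<dots> = 0" unfolding D_def ode2 by simp
  finally obtain h where h: "Q = [:h:]" using pderiv_iszero by blast
  have "h = poly Q 0" using h by simp
  also have "\<dots> = of_nat (n*n) * coeff D 0 ^ 2 + 4 * a * coeff D 1 ^ 2"
  proof -
    have p0: "poly D 0 = coeff D 0" "poly (pderiv D) 0 = coeff D 1"
      by (simp_all add: poly_0_coeff_0 coeff_pderiv)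
    show ?thesis unfolding Q_def by (simp add: p0 power2_eq_square)
  qed
  also have "\<dots> = 4 * of_nat (n*n) * a ^ n" unfolding D_def by (rule dickson_c01[OF assms(1)])
  finally show ?thesis using h Q_def by simp
qed

lemma map_dickson: "map_poly to_ac (dickson n a) = dickson n (to_ac (a::'a::field))"
proof (rule poly_eqI)
  fix k
  have e: "\<And>j. to_ac (dc n a j) = dc n (to_ac a) j" by (simp add: dc_def)
  show "coeff (map_poly to_ac (dickson n a)) k = coeff (dickson n (to_ac a)) k"
    unfolding coeff_map_poly[of to_ac, OF to_ac_0] coeff_dickson
    by (cases "k \<le> n \<and> even (n - k)") (simp_all only: simp_thms if_True if_False to_ac_0 e)
qed

lemma card_roots_rsquarefree:
  fixes p :: "'b::{field_char_0,alg_closed_field} poly"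
  assumes "rsquarefree p"
  shows "card {z. poly p z = 0} = degree p"
  using assms
proof (induction "degree p" arbitrary: p rule: less_induct)
  case less
  have p0: "p \<noteq> 0" using less.prems by (simp add: rsquarefree_def)
  show ?case
  proof (cases "degree p = 0")
    case True
    then obtain c where c: "p = [:c:]" by (metis degree_eq_zeroE)
    with p0 have "c \<noteq> 0" by simp
    thus ?thesis using c True by simp
  next
    case False
    then obtain x where x: "poly p x = 0" using alg_closed_imp_poly_has_root by blast
    then obtain q where q: "p = [:-x,1:] * q" by (metis poly_eq_0_iff_dvd dvdE)
    have q0: "q \<noteq> 0" using p0 q by auto
    have "degree p = degree [:-x,1:] + degree q" unfolding q by (rule degree_mult_eq) (use q0 in simp_all)
    hence degq: "degree p = Suc (degree q)" by simp
    have pq0: "[:-x,1:]*q \<noteq> 0" using p0 q by simp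
    have ordq: "\<And>z. order z p = order z [:-x,1:] + order z q"
      unfolding q by (rule order_mult[OF pq0])
    have ox: "order x [:-x,1:] = 1" using order_power_n_n[of x 1] by simp
    have "order x p \<le> 1" using less.prems unfolding rsquarefree_def by (metis le_refl zero_le)
    hence "order x q = 0" using ordq[of x] ox by simp
    hence qx: "poly q x \<noteq> 0" using q0 order_root by blast
    have "rsquarefree q"
      unfolding rsquarefree_def using q0 less.prems ordq
      by (auto simp: rsquarefree_def)
    hence IH: "card {z. poly q z = 0} = degree q" using less.hyps degq by simp
    have "{z. poly p z = 0} = insert x {z. poly q z = 0}" using q by auto
    moreover have "finite {z. poly q z = 0}" using q0 by (rule poly_roots_finite)
    ultimately show ?thesis using qx IH degq by simp
  qed
qed

lemma degree_dickson:
  fixes a :: "'a::field_char_0"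
  assumes "n \<ge> 1"
  shows "degree (dickson n a) = n"
proof (rule order.antisym)
  show "degree (dickson n a) \<le> n" by (rule degree_le) (simp add: coeff_dickson)
  have "coeff (dickson n a) n = 1" using assms by (simp add: coeff_dickson dc_def)
  thus "n \<le> degree (dickson n a)" by (intro le_degree) simp
qed

lemma main_gen:
  fixes b :: "'b::{field_char_0,alg_closed_field}"
  assumes b: "b \<noteq> 0" and n: "n \<ge> 1"
  defines "D \<equiv> dickson n b"
  shows "card {z. poly (pderiv D) z = 0} = n - 1"
    and "\<And>z. poly (pderiv D) z = 0 \<Longrightarrow> (poly D z)^2 = 4 * b^n"
proof -
  have nn: "(of_nat (n*n) :: 'b) \<noteq> 0" using n by simp
  have id: "\<And>z. of_nat (n*n) * (poly D z * poly D z) - poly [:-4*b,0,1:] z * (poly (pderiv D) z * poly (pderiv D) z)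
     = 4 * of_nat (n*n) * b^n"
  proof -
    fix z
    have "poly ([:of_nat (n*n):] * (D * D) - [:-4*b,0,1:] * (pderiv D * pderiv D)) z = poly [:4 * of_nat (n*n) * b^n:] z"
      unfolding D_def dickson_id[OF n] by (rule refl)
    thus "of_nat (n*n) * (poly D z * poly D z) - poly [:-4*b,0,1:] z * (poly (pderiv D) z * poly (pderiv D) z)
     = 4 * of_nat (n*n) * b^n" by (simp add: algebra_simps)
  qed
  show cv: "(poly D z)^2 = 4 * b^n" if "poly (pderiv D) z = 0" for z
    using id[of z] that nn by (simp add: power2_eq_square)
  have "rsquarefree (pderiv D)"
    unfolding rsquarefree_roots
  proof (intro allI notI)
    fix z assume z: "poly (pderiv D) z = 0 \<and> poly (pderiv (pderiv D)) z = 0"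
    have "poly ([:-4*b,0,1:] * pderiv (pderiv D) + [:0,1:] * pderiv D) z = poly ([:of_nat (n*n):] * D) z"
      unfolding D_def ode2 by (rule refl)
    hence "poly D z = 0" using z nn by simp
    hence "(poly D z)^2 = 0" by simp
    with cv[of z] z b show False by simp
  qed
  moreover have "degree (pderiv D) = n - 1" unfolding D_def degree_pderiv degree_dickson[OF n] ..
  ultimately show "card {z. poly (pderiv D) z = 0} = n - 1" using card_roots_rsquarefree by metis
qed

lemma two_in: "card A \<ge> 2 \<Longrightarrow> \<exists>x y. x \<noteq> y \<and> x \<in> A \<and> y \<in> A"
proof -
  assume "card A \<ge> 2"
  then obtain B where "B \<subseteq> A" "card B = 2" using obtain_subset_with_card_n by metis
  thus ?thesis unfolding card_2_iff by blast
qed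

lemma three_in: "card A \<ge> 3 \<Longrightarrow> \<exists>x y z. x \<noteq> y \<and> x \<noteq> z \<and> y \<noteq> z \<and> x \<in> A \<and> y \<in> A \<and> z \<in> A"
proof -
  assume "card A \<ge> 3"
  then obtain B where "B \<subseteq> A" "card B = 3" using obtain_subset_with_card_n by metis
  thus ?thesis unfolding card_3_iff by blast
qed

lemma split_card:
  assumes "finite S" "\<forall>z\<in>S. f z = u \<or> f z = v"
  shows "card S \<le> card {z\<in>S. f z = u} + card {z\<in>S. f z = v}"
proof -
  have "S = {z\<in>S. f z = u} \<union> {z\<in>S. f z = v}" using assms(2) by auto
  hence "card S = card ({z\<in>S. f z = u} \<union> {z\<in>S. f z = v})" by simp
  also have "\<dots> \<le> card {z\<in>S. f z = u} + card {z\<in>S. f z = v}" by (rule card_Un_le)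
  finally show ?thesis .
qed

lemma pig2:
  assumes "card S \<ge> 3" "\<forall>z\<in>S. f z = u \<or> f z = v"
  shows "\<exists>x y. x \<noteq> y \<and> x \<in> S \<and> y \<in> S \<and> f x = f y"
proof -
  have "finite S" using assms(1) card.infinite by fastforce
  from split_card[OF this assms(2)] assms(1)
  have "card {z\<in>S. f z = u} \<ge> 2 \<or> card {z\<in>S. f z = v} \<ge> 2" by linarith
  thus ?thesis
  proof
    assume "card {z\<in>S. f z = u} \<ge> 2" from two_in[OF this] obtain x y where "x \<noteq> y" "x \<in> S" "y \<in> S" "f x = u" "f y = u" by blast
    thus ?thesis by metis
  next
    assume "card {z\<in>S. f z = v} \<ge> 2" from two_in[OF this] obtain x y where "x \<noteq> y" "x \<in> S" "y \<in> S" "f x = v" "f y = v" by blast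
    thus ?thesis by metis
  qed
qed

lemma pig3:
  assumes "card S \<ge> 5" "\<forall>z\<in>S. f z = u \<or> f z = v"
  shows "\<exists>x y z. x \<noteq> y \<and> x \<noteq> z \<and> y \<noteq> z \<and> x \<in> S \<and> y \<in> S \<and> z \<in> S \<and> f x = f y \<and> f y = f z"
proof -
  have "finite S" using assms(1) card.infinite by fastforce
  from split_card[OF this assms(2)] assms(1)
  have "card {z\<in>S. f z = u} \<ge> 3 \<or> card {z\<in>S. f z = v} \<ge> 3" by linarith
  thus ?thesis
  proof
    assume "card {z\<in>S. f z = u} \<ge> 3" from three_in[OF this] obtain x y z where "x \<noteq> y" "x \<noteq> z" "y \<noteq> z" "x \<in> S" "y \<in> S" "z \<in> S" "f x = u" "f y = u" "f z = u" by blast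
    thus ?thesis by metis
  next
    assume "card {z\<in>S. f z = v} \<ge> 3" from three_in[OF this] obtain x y z where "x \<noteq> y" "x \<noteq> z" "y \<noteq> z" "x \<in> S" "y \<in> S" "z \<in> S" "f x = v" "f y = v" "f z = v" by blast
    thus ?thesis by metis
  qed
qed

theorem corollary2p2:
  fixes a :: "'a::field_char_0" and n :: nat
  assumes "a \<noteq> 0"
  shows "(n \<ge> 4 \<longrightarrow> (\<exists>x y. x \<noteq> y \<and> critical_point (dickson n a) x \<and> critical_point (dickson n a) y
            \<and> critical_value (dickson n a) x = critical_value (dickson n a) y))
       \<and> (n \<ge> 6 \<longrightarrow> (\<exists>x y z. x \<noteq> y \<and> x \<noteq> z \<and> y \<noteq> z
            \<and> critical_point (dickson n a) x \<and> critical_point (dickson n a) y \<and> critical_point (dickson n a) z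
            \<and> critical_value (dickson n a) x = critical_value (dickson n a) y
            \<and> critical_value (dickson n a) y = critical_value (dickson n a) z))"
proof -
  define b where "b = to_ac a"
  define D where "D = dickson n b"
  define S where "S = {z. poly (pderiv D) z = 0}"
  define f where "f = (\<lambda>z. poly D z)"
  have b0: "b \<noteq> 0" using assms unfolding b_def by simp
  have cp: "critical_point (dickson n a) x \<longleftrightarrow> x \<in> S" for x
    unfolding critical_point_def map_dickson S_def D_def b_def by simp
  have cv: "critical_value (dickson n a) x = f x" for x
    unfolding critical_value_def map_dickson f_def D_def b_def by simp
  have main: "n \<ge> 4 \<Longrightarrow> card S = n - 1 \<and> (\<exists>u. \<forall>z\<in>S. f z = u \<or> f z = -u)"
  proof -
    assume n4: "n \<ge> 4"
    hence n1: "n \<ge> 1" by simp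
    have cS: "card S = n - 1" unfolding S_def D_def by (rule main_gen(1)[OF b0 n1])
    hence "S \<noteq> {}" using n4 by auto
    then obtain z0 where z0: "z0 \<in> S" by blast
    have sq: "\<And>z. z \<in> S \<Longrightarrow> (f z)^2 = 4 * b^n"
      unfolding S_def f_def D_def using main_gen(2)[OF b0 n1] by blast
    have "\<forall>z\<in>S. f z = f z0 \<or> f z = - f z0"
    proof
      fix z assume "z \<in> S"
      hence "(f z)^2 = (f z0)^2" using sq z0 by simp
      thus "f z = f z0 \<or> f z = - f z0" by (simp add: power2_eq_iff)
    qed
    with cS show ?thesis by blast
  qed
  show ?thesis
  proof (intro conjI impI)
    assume "n \<ge> 4"
    with main obtain u where "card S = n - 1" "\<forall>z\<in>S. f z = u \<or> f z = -u" by blast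
    with \<open>n \<ge> 4\<close> have "card S \<ge> 3" by simp
    from pig2[OF this \<open>\<forall>z\<in>S. f z = u \<or> f z = -u\<close>]
    show "\<exists>x y. x \<noteq> y \<and> critical_point (dickson n a) x \<and> critical_point (dickson n a) y
            \<and> critical_value (dickson n a) x = critical_value (dickson n a) y"
      unfolding cp cv by blast
  next
    assume "n \<ge> 6"
    with main obtain u where "card S = n - 1" "\<forall>z\<in>S. f z = u \<or> f z = -u" by fastforce
    with \<open>n \<ge> 6\<close> have "card S \<ge> 5" by simp
    from pig3[OF this \<open>\<forall>z\<in>S. f z = u \<or> f z = -u\<close>]
    show "\<exists>x y z. x \<noteq> y \<and> x \<noteq> z \<and> y \<noteq> z
            \<and> critical_point (dickson n a) x \<and> critical_point (dickson n a) y \<and> critical_point (dickson n a) z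
            \<and> critical_value (dickson n a) x = critical_value (dickson n a) y
            \<and> critical_value (dickson n a) y = critical_value (dickson n a) z"
      unfolding cp cv by blast
  qed
qed

end
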